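(* Let $G=(V,E)$ be a graph with colouring $f:V\to\{B,R\}$. If $E'$ is an optimal solution to the MIE problem on $(G,f)$, or an optimal solution to the MIAE problem on $(G,f)$, then no edge of $E'\setminus E$ has both endpoints red.
   Context: Graphs are finite, simple and undirected. A colouring $f:V\to\{B,R\}$ partitions $V$ into the blue nodes $B=f^{-1}(B)$ and red nodes $R=f^{-1}(R)$. For an edge set $E'$ on $V$ and $v\in V$, let $b_{E'}(v)$ and $r_{E'}(v)$ be the numbers of blue and red neighbours of $v$ in $(V,E')$. A node $v$ is under (majority) illusion in $(V,E')$ if $r_{E'}(v)>b_{E'}(v)$. Standing assumption: $|B|>|R|$. An optimal solution to MIAE is an edge set $E'\supseteq E$ on $V$ such that no node is under illusion in $(V,E')$ and $|E'\setminus E|$ is minimum among all such sets. An optimal solution to MIRE is an edge set $E'\subseteq E$ such that no node is under illusion in $(V,E')$ and $|E\setminus E'|$ is minimum among all such sets. An optimal solution to MIE is an edge set $E'$ on $V$ such that no node is under illusion in $(V,E')$ and $|E\setminus E'|+|E'\setminus E|$ is minimum among all such sets. *)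

theory Defs
  imports Main
begin

datatype colour = B | R

definition edge_set_on :: "'a set \<Rightarrow> 'a set set \<Rightarrow> bool" where
  "edge_set_on V E \<longleftrightarrow> (\<forall>e\<in>E. \<exists>u v. u \<in> V \<and> v \<in> V \<and> u \<noteq> v \<and> e = {u, v})"

definition blue_nbrs :: "'a set \<Rightarrow> 'a set set \<Rightarrow> ('a \<Rightarrow> colour) \<Rightarrow> 'a \<Rightarrow> nat" where
  "blue_nbrs V E f v = card {u \<in> V. u \<noteq> v \<and> {u, v} \<in> E \<and> f u = B}"

definition red_nbrs :: "'a set \<Rightarrow> 'a set set \<Rightarrow> ('a \<Rightarrow> colour) \<Rightarrow> 'a \<Rightarrow> nat" where
  "red_nbrs V E f v = card {u \<in> V. u \<noteq> v \<and> {u, v} \<in> E \<and> f u = R}"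

definition under_illusion :: "'a set \<Rightarrow> 'a set set \<Rightarrow> ('a \<Rightarrow> colour) \<Rightarrow> 'a \<Rightarrow> bool" where
  "under_illusion V E f v \<longleftrightarrow> red_nbrs V E f v > blue_nbrs V E f v"

definition no_illusion :: "'a set \<Rightarrow> 'a set set \<Rightarrow> ('a \<Rightarrow> colour) \<Rightarrow> bool" where
  "no_illusion V E f \<longleftrightarrow> (\<forall>v\<in>V. \<not> under_illusion V E f v)"

definition opt_MIAE :: "'a set \<Rightarrow> 'a set set \<Rightarrow> ('a \<Rightarrow> colour) \<Rightarrow> 'a set set \<Rightarrow> bool" where
  "opt_MIAE V E f E' \<longleftrightarrow> edge_set_on V E' \<and> E \<subseteq> E' \<and> no_illusion V E' f \<and>
     (\<forall>E''. edge_set_on V E'' \<and> E \<subseteq> E'' \<and> no_illusion V E'' f \<longrightarrow> card (E' - E) \<le> card (E'' - E))"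

definition opt_MIRE :: "'a set \<Rightarrow> 'a set set \<Rightarrow> ('a \<Rightarrow> colour) \<Rightarrow> 'a set set \<Rightarrow> bool" where
  "opt_MIRE V E f E' \<longleftrightarrow> E' \<subseteq> E \<and> no_illusion V E' f \<and>
     (\<forall>E''. E'' \<subseteq> E \<and> no_illusion V E'' f \<longrightarrow> card (E - E') \<le> card (E - E''))"

definition opt_MIE :: "'a set \<Rightarrow> 'a set set \<Rightarrow> ('a \<Rightarrow> colour) \<Rightarrow> 'a set set \<Rightarrow> bool" where
  "opt_MIE V E f E' \<longleftrightarrow> edge_set_on V E' \<and> no_illusion V E' f \<and>
     (\<forall>E''. edge_set_on V E'' \<and> no_illusion V E'' f \<longrightarrow>
        card (E - E') + card (E' - E) \<le> card (E - E'') + card (E'' - E))"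

end

theory Submission
  imports Defs
begin

lemma remove_rr_no_illusion:
  assumes fin: "finite V" and ni: "no_illusion V E' f"
    and fu: "f u = R" and fv: "f v = R"
  shows "no_illusion V (E' - {{u,v}}) f"
proof -
  have b: "blue_nbrs V (E' - {{u,v}}) f w = blue_nbrs V E' f w" for w
  proof -
    have "{x \<in> V. x \<noteq> w \<and> {x, w} \<in> E' - {{u,v}} \<and> f x = B}
        = {x \<in> V. x \<noteq> w \<and> {x, w} \<in> E' \<and> f x = B}"
    proof (rule Collect_cong)
      fix x
      show "(x \<in> V \<and> x \<noteq> w \<and> {x, w} \<in> E' - {{u,v}} \<and> f x = B) =
            (x \<in> V \<and> x \<noteq> w \<and> {x, w} \<in> E' \<and> f x = B)"
      proof -
        have "f x = B \<Longrightarrow> {x, w} \<noteq> {u, v}"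
        proof
          assume "f x = B" "{x, w} = {u, v}"
          then have "x \<in> {u, v}" by blast
          then show False using fu fv \<open>f x = B\<close> by auto
        qed
        then show ?thesis by blast
      qed
    qed
    thus ?thesis unfolding blue_nbrs_def by simp
  qed
  have r: "red_nbrs V (E' - {{u,v}}) f w \<le> red_nbrs V E' f w" for w
    unfolding red_nbrs_def by (rule card_mono) (use fin in auto)
  show ?thesis unfolding no_illusion_def under_illusion_def
  proof (intro ballI notI)
    fix w assume "w \<in> V" and lt: "blue_nbrs V (E' - {{u,v}}) f w < red_nbrs V (E' - {{u,v}}) f w"
    have "\<not> blue_nbrs V E' f w < red_nbrs V E' f w"
      using ni \<open>w \<in> V\<close> unfolding no_illusion_def under_illusion_def by blast
    with lt b[of w] r[of w] show False by linarith
  qed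
qed

lemma edge_set_on_remove: "edge_set_on V E' \<Longrightarrow> edge_set_on V (E' - X)"
  unfolding edge_set_on_def by (simp add: Ball_def)

lemma edge_fin:
  assumes "finite V" "edge_set_on V E'" shows "finite E'"
proof -
  have "E' \<subseteq> Pow V"
  proof
    fix e assume "e \<in> E'"
    then obtain u v where "u \<in> V" "v \<in> V" "e = {u, v}"
      using assms(2) unfolding edge_set_on_def by blast
    then show "e \<in> Pow V" by simp
  qed
  thus ?thesis by (rule finite_subset) (simp add: assms(1))
qed

theorem mainTheorem1:
  fixes V :: "'a set" and E E' :: "'a set set" and f :: "'a \<Rightarrow> colour"
  assumes "finite V"
    and "edge_set_on V E"
    and "card {v \<in> V. f v = B} > card {v \<in> V. f v = R}"
    and "opt_MIE V E f E' \<or> opt_MIAE V E f E'"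
  shows "\<forall>u v. {u, v} \<in> E' - E \<longrightarrow> \<not> (f u = R \<and> f v = R)"
proof (intro allI impI notI)
  fix u v assume e: "{u, v} \<in> E' - E" and rr: "f u = R \<and> f v = R"
  define E'' where "E'' = E' - {{u,v}}"
  have es: "edge_set_on V E'" and ni: "no_illusion V E' f"
    using assms(4) unfolding opt_MIE_def opt_MIAE_def by (elim disjE conjE; simp)+
  have ni'': "no_illusion V E'' f" unfolding E''_def
    using rr by (intro remove_rr_no_illusion[OF assms(1) ni]) simp_all
  have es'': "edge_set_on V E''" unfolding E''_def by (rule edge_set_on_remove[OF es])
  have finE': "finite E'" by (rule edge_fin[OF assms(1) es])
  have d1: "E - E'' = E - E'" unfolding E''_def using e by auto
  have d2: "E'' - E = (E' - E) - {{u,v}}" unfolding E''_def by auto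
  have lt: "card (E'' - E) < card (E' - E)"
    unfolding d2 by (rule card_Diff1_less) (use e finE' in auto)
  show False
  proof (cases "opt_MIE V E f E'")
    case True
    then have "card (E - E') + card (E' - E) \<le> card (E - E'') + card (E'' - E)"
    proof -
      have "\<forall>E2. edge_set_on V E2 \<and> no_illusion V E2 f \<longrightarrow>
        card (E - E') + card (E' - E) \<le> card (E - E2) + card (E2 - E)"
        using True unfolding opt_MIE_def by (elim conjE)
      then show ?thesis using ni'' es'' by blast
    qed
    thus False using lt unfolding d1 by linarith
  next
    case False
    then have o: "opt_MIAE V E f E'" using assms(4) by blast
    have "E \<subseteq> E'" using o unfolding opt_MIAE_def by (elim conjE)
    then have "E \<subseteq> E''" using e unfolding E''_def by blast
    then have "card (E' - E) \<le> card (E'' - E)"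
    proof -
      have "\<forall>E2. edge_set_on V E2 \<and> E \<subseteq> E2 \<and> no_illusion V E2 f \<longrightarrow> card (E' - E) \<le> card (E2 - E)"
        using o unfolding opt_MIAE_def by (elim conjE)
      then show ?thesis using ni'' es'' \<open>E \<subseteq> E''\<close> by blast
    qed
    thus False using lt by linarith
  qed
qed

end
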